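(* Let $p\ge1$, $\phi_1,\dots,\phi_p:\mathbb Z\to\mathbb C$, $v:\mathbb Z\to\mathbb C$, $s\in\mathbb Z$, and let $y:\{s-p+1,s-p+2,\dots\}\to\mathbb C$ satisfy $y_t=\sum_{l=1}^p\phi_l(t)y_{t-l}+v_t$ for all $t\ge s+1$. Then for all $t>s$, $$y_t=\sum_{m=1}^{p}\sum_{j=1}^{p-m+1}\phi_{m+j-1}(s+j)\,H(t,s+j)\,y_{s-m+1}+\sum_{j=1}^{t-s}H(t,s+j)\,v_{s+j}.$$
   Context: $\Gamma_t$ is the $p\times p$ companion matrix with first row $(\phi_1(t),\dots,\phi_p(t))$, entries $(i,i-1)$ equal to $1$ for $2\le i\le p$, other entries $0$. The Green's function is defined for integers $u$ and $t\ge u-p+1$ by: $H(t,u)$ is the $(1,1)$ entry of $\Gamma_t\Gamma_{t-1}\cdots\Gamma_{u+1}$ if $t>u$; $H(u,u)=1$; $H(t,u)=0$ if $u-p+1\le t<u$. *)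

theory Defs
  imports Complex_Main "Jordan_Normal_Form.Matrix"
begin

definition companion :: "nat \<Rightarrow> (nat \<Rightarrow> int \<Rightarrow> complex) \<Rightarrow> int \<Rightarrow> complex mat" where
  "companion p \<phi> t = mat p p (\<lambda>(i, j). if i = 0 then \<phi> (j + 1) t
                                        else if i = j + 1 then 1 else 0)"

fun gprod :: "nat \<Rightarrow> (nat \<Rightarrow> int \<Rightarrow> complex) \<Rightarrow> int \<Rightarrow> nat \<Rightarrow> complex mat" where
  "gprod p \<phi> t 0 = 1\<^sub>m p"
| "gprod p \<phi> t (Suc k) = companion p \<phi> t * gprod p \<phi> (t - 1) k"

text \<open>Green's function: H(t,u) = (1,1) entry of Gamma_t ... Gamma_(u+1) if t > u,
  H(u,u) = 1, and 0 if t < u (the paper only uses u-p+1 <= t < u).\<close>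
definition green :: "nat \<Rightarrow> (nat \<Rightarrow> int \<Rightarrow> complex) \<Rightarrow> int \<Rightarrow> int \<Rightarrow> complex" where
  "green p \<phi> t u = (if t > u then gprod p \<phi> t (nat (t - u)) $$ (0, 0)
                     else if t = u then 1 else 0)"

end

theory Submission
  imports Defs
begin

lemma gprod_carrier: "gprod p \<phi> t k \<in> carrier_mat p p"
proof (induction k arbitrary: t)
  case (Suc k)
  have "companion p \<phi> t \<in> carrier_mat p p" by (simp add: companion_def)
  then show ?case using Suc.IH[of "t-1"] by (simp add: mult_carrier_mat)
qed simp

lemma mult_entry:
  assumes "A \<in> carrier_mat n n" "B \<in> carrier_mat n n" "i < n" "j < n"
  shows "(A * B) $$ (i,j) = (\<Sum>k<n. A $$ (i,k) * B $$ (k,j))"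
  using assms by (auto simp: scalar_prod_def atLeast0LessThan intro!: sum.cong)

lemma gprod_col:
  assumes "i < p"
  shows "gprod p \<phi> t k $$ (i,0) = green p \<phi> (t - int i) (t - int k)"
  using assms
proof (induction k arbitrary: t i)
  case 0
  then show ?case by (simp add: green_def)
next
  case (Suc k)
  show ?case
  proof (cases i)
    case 0
    have "nat (1 + int k) = Suc k" by simp
    then show ?thesis using 0 by (simp add: green_def)
  next
    case (Suc i')
    have "gprod p \<phi> t (Suc k) $$ (i,0)
        = (\<Sum>j<p. companion p \<phi> t $$ (i,j) * gprod p \<phi> (t-1) k $$ (j,0))"
      using Suc.prems by (simp only: gprod.simps, intro mult_entry gprod_carrier)
        (auto simp: companion_def)
    also have "\<dots> = (\<Sum>j<p. if j = i' then gprod p \<phi> (t-1) k $$ (j,0) else 0)"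
      using Suc.prems Suc by (intro sum.cong) (auto simp: companion_def)
    also have "\<dots> = gprod p \<phi> (t-1) k $$ (i',0)"
      using Suc.prems Suc by simp
    also have "\<dots> = green p \<phi> (t - 1 - int i') (t - 1 - int k)"
      using Suc.prems Suc Suc.IH by simp
    finally show ?thesis using Suc by (simp add: algebra_simps)
  qed
qed

lemma green_rec:
  assumes "p \<ge> 1"
  shows "(\<Sum>l=1..p. \<phi> l t * green p \<phi> (t - int l) u) = green p \<phi> t u - (if t = u then 1 else 0)"
proof (cases "t > u")
  case True
  then obtain k where k: "nat (t - u) = Suc k" by (metis gr0_implies_Suc zero_less_nat_eq diff_gt_0_iff_gt)
  have tu: "t - (1 + int k) = u" using k True by linarith
  have "green p \<phi> t u = gprod p \<phi> t (Suc k) $$ (0,0)" using True k by (simp add: green_def)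
  also have "\<dots> = (\<Sum>j<p. companion p \<phi> t $$ (0,j) * gprod p \<phi> (t-1) k $$ (j,0))"
    using assms by (simp only: gprod.simps, intro mult_entry gprod_carrier)
        (auto simp: companion_def)
  also have "\<dots> = (\<Sum>j<p. \<phi> (Suc j) t * green p \<phi> (t - int (Suc j)) u)"
  proof (intro sum.cong refl)
    fix j assume j: "j \<in> {..<p}"
    have e1: "companion p \<phi> t $$ (0,j) = \<phi> (Suc j) t" using j assms by (simp add: companion_def)
    have e2: "gprod p \<phi> (t-1) k $$ (j,0) = green p \<phi> (t - 1 - int j) (t - 1 - int k)"
      using j by (simp add: gprod_col)
    have e3: "t - 1 - int j = t - int (Suc j)" "t - 1 - int k = u" using tu by simp_all
    show "companion p \<phi> t $$ (0,j) * gprod p \<phi> (t-1) k $$ (j,0) = \<phi> (Suc j) t * green p \<phi> (t - int (Suc j)) u"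
      unfolding e1 e2 e3 ..
  qed
  also have "\<dots> = (\<Sum>l\<in>Suc ` {..<p}. \<phi> l t * green p \<phi> (t - int l) u)"
    by (subst sum.reindex) auto
  also have "\<dots> = (\<Sum>l=1..p. \<phi> l t * green p \<phi> (t - int l) u)"
    by (simp only: image_Suc_lessThan)
  finally show ?thesis using True by simp
next
  case False
  then show ?thesis by (auto simp: green_def intro!: sum.neutral)
qed

lemma lin:
  assumes "p \<ge> 1" "finite S"
  shows "(\<Sum>l=1..p. \<phi> l t * (\<Sum>x\<in>S. c x * green p \<phi> (t - int l) (f x)))
       = (\<Sum>x\<in>S. c x * (green p \<phi> t (f x) - (if t = f x then 1 else 0)))"
proof -
  have "(\<Sum>l=1..p. \<phi> l t * (\<Sum>x\<in>S. c x * green p \<phi> (t - int l) (f x)))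
      = (\<Sum>l=1..p. \<Sum>x\<in>S. \<phi> l t * (c x * green p \<phi> (t - int l) (f x)))"
    by (simp add: sum_distrib_left)
  also have "\<dots> = (\<Sum>x\<in>S. \<Sum>l=1..p. \<phi> l t * (c x * green p \<phi> (t - int l) (f x)))"
    by (rule sum.swap)
  also have "\<dots> = (\<Sum>x\<in>S. c x * (\<Sum>l=1..p. \<phi> l t * green p \<phi> (t - int l) (f x)))"
    by (simp add: sum_distrib_left mult.left_commute)
  also have "\<dots> = (\<Sum>x\<in>S. c x * (green p \<phi> t (f x) - (if t = f x then 1 else 0)))"
    using green_rec[OF assms(1)] by simp
  finally show ?thesis .
qed

lemma reidx_nat:
  fixes f :: "nat \<Rightarrow> 'a::comm_monoid_add"
  assumes "J \<ge> 1"
  shows "(\<Sum>m=1..p. if J \<le> p - m + 1 then f (m + J - 1) else 0) = (\<Sum>l=1..p. if J \<le> l then f l else 0)"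
proof -
  have r: "(\<Sum>l=1..p. if J \<le> l then f l else 0) = sum f ({1..p} \<inter> {l. J \<le> l})"
    by (simp add: sum.inter_restrict)
  have "{1..p} \<inter> {l. J \<le> l} = {J..p}" using assms by auto
  with r have r2: "(\<Sum>l=1..p. if J \<le> l then f l else 0) = sum f {J..p}" by simp
  have l: "(\<Sum>m=1..p. if J \<le> p - m + 1 then f (m + J - 1) else 0)
       = sum (\<lambda>m. f (m + J - 1)) ({1..p} \<inter> {m. J \<le> p - m + 1})"
    by (subst sum.inter_restrict) auto
  have "{1..p} \<inter> {m. J \<le> p - m + 1} = {1..p+1-J}" using assms by auto
  with l have l2: "(\<Sum>m=1..p. if J \<le> p - m + 1 then f (m + J - 1) else 0)
       = sum (\<lambda>m. f (m + (J - 1))) {1..p+1-J}"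
    using assms by (simp add: add.commute)
  show ?thesis
  proof (cases "J \<le> p + 1")
    case True
    have "sum f {1 + (J-1)..(p+1-J) + (J-1)} = sum (\<lambda>m. f (m + (J - 1))) {1..p+1-J}"
      by (rule sum.shift_bounds_cl_nat_ivl)
    moreover have "1 + (J-1) = J" "(p+1-J) + (J-1) = p" using True assms by auto
    ultimately show ?thesis using l2 r2 by simp
  next
    case False
    then show ?thesis using l2 r2 by simp
  qed
qed

lemma B_ext:
  assumes "N \<ge> nat (t' - s)"
  shows "(\<Sum>j=1..nat (t' - s). green p \<phi> t' (s + int j) * w (s + int j))
       = (\<Sum>j=1..N. green p \<phi> t' (s + int j) * w (s + int j))"
proof (rule sum.mono_neutral_left)
  show "{1..nat (t' - s)} \<subseteq> {1..N}" using assms by auto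
  show "\<forall>i\<in>{1..N} - {1..nat (t' - s)}. green p \<phi> t' (s + int i) * w (s + int i) = 0"
    by (auto simp: green_def)
qed simp

theorem mainTheorem13:
  fixes p :: nat and \<phi> :: "nat \<Rightarrow> int \<Rightarrow> complex" and v y :: "int \<Rightarrow> complex" and s :: int
  assumes "p \<ge> 1"
    and rec: "\<And>t. t \<ge> s + 1 \<Longrightarrow> y t = (\<Sum>l = 1..p. \<phi> l t * y (t - int l)) + v t"
  shows "\<forall>t > s. y t =
           (\<Sum>m = 1..p. \<Sum>j = 1..p - m + 1.
               \<phi> (m + j - 1) (s + int j) * green p \<phi> t (s + int j) * y (s - int m + 1))
         + (\<Sum>j = 1..nat (t - s). green p \<phi> t (s + int j) * v (s + int j))"
proof -
  define G where "G = green p \<phi>"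
  define c where "c = (\<lambda>(m::nat,j::nat). \<phi> (m+j-1) (s + int j) * y (s - int m + 1))"
  define S where "S = Sigma {1..p} (\<lambda>m. {1..p-m+1})"
  define A where "A t' = (\<Sum>x\<in>S. c x * G t' (s + int (snd x)))" for t'
  define B where "B t' = (\<Sum>j=1..nat (t' - s). G t' (s + int j) * v (s + int j))" for t'
  have finS: "finite S" by (simp add: S_def)
  have Aeq: "(\<Sum>m = 1..p. \<Sum>j = 1..p - m + 1.
               \<phi> (m + j - 1) (s + int j) * G t' (s + int j) * y (s - int m + 1)) = A t'" for t'
  proof -
    have "(\<Sum>m = 1..p. \<Sum>j = 1..p - m + 1.
               \<phi> (m + j - 1) (s + int j) * G t' (s + int j) * y (s - int m + 1))
       = (\<Sum>m = 1..p. \<Sum>j = 1..p - m + 1. c (m,j) * G t' (s + int (snd (m,j))))"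
      by (simp add: c_def mult_ac)
    also have "\<dots> = A t'" unfolding A_def S_def
      by (subst sum.Sigma) (auto simp: case_prod_beta')
    finally show ?thesis .
  qed
  have A0: "A t' = 0" if "t' \<le> s" for t'
    unfolding A_def using that by (intro sum.neutral) (auto simp: S_def G_def green_def)
  have B0: "B t' = 0" if "t' \<le> s" for t'
    unfolding B_def using that by simp
  have claim: "\<forall>t. nat (t - (s - int p + 1)) = n \<longrightarrow> t \<ge> s - int p + 1 \<longrightarrow>
      y t = A t + B t + (if t \<le> s then y t else 0)" for n
  proof (induction n rule: less_induct)
    case (less n)
    show ?case
    proof (intro allI impI)
      fix t assume tn: "nat (t - (s - int p + 1)) = n" and tge: "t \<ge> s - int p + 1"
      show "y t = A t + B t + (if t \<le> s then y t else 0)"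
      proof (cases "t \<le> s")
        case True
        then show ?thesis using A0 B0 by simp
      next
        case False
        define C where "C t' = (if t' \<le> s then y t' else 0)" for t'
        define J where "J = nat (t - s)"
        have tJ: "t = s + int J" and J1: "J \<ge> 1" using False by (auto simp: J_def)
        have IH: "y (t - int l) = A (t - int l) + B (t - int l) + C (t - int l)" if "l \<in> {1..p}" for l
        proof -
          have lt: "nat (t - int l - (s - int p + 1)) < n" using that tn False by auto
          have ge: "t - int l \<ge> s - int p + 1" using that False by auto
          from less.IH[OF lt] ge show ?thesis unfolding C_def by blast
        qed
        have "y t = (\<Sum>l = 1..p. \<phi> l t * y (t - int l)) + v t" using rec False by simp
        also have "\<dots> = (\<Sum>l = 1..p. \<phi> l t * A (t - int l)) + (\<Sum>l = 1..p. \<phi> l t * B (t - int l))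
            + (\<Sum>l = 1..p. \<phi> l t * C (t - int l)) + v t"
          using IH by (simp add: sum.distrib distrib_left)
        also have "(\<Sum>l = 1..p. \<phi> l t * A (t - int l))
            = (\<Sum>x\<in>S. c x * (G t (s + int (snd x)) - (if t = s + int (snd x) then 1 else 0)))"
          unfolding A_def G_def by (rule lin[OF assms(1) finS])
        also have "\<dots> = A t - (\<Sum>x\<in>S. c x * (if t = s + int (snd x) then 1 else 0))"
          unfolding A_def by (simp add: right_diff_distrib sum_subtractf)
        also have "(\<Sum>l = 1..p. \<phi> l t * B (t - int l))
            = (\<Sum>l = 1..p. \<phi> l t * (\<Sum>j\<in>{1..J}. v (s + int j) * G (t - int l) (s + int j)))"
          unfolding B_def J_def G_def
          by (intro sum.cong refl, subst B_ext[where N="nat (t - s)"]) (auto simp: mult.commute)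
        also have "\<dots> = (\<Sum>j\<in>{1..J}. v (s + int j) * (G t (s + int j) - (if t = s + int j then 1 else 0)))"
          unfolding G_def by (rule lin[OF assms(1)]) simp
        also have "\<dots> = B t - v t"
        proof -
          have eq: "\<And>j. v (s + int j) * (if J = j then 1 else 0) = (if J = j then v (s + int j) else 0)"
            by simp
          show ?thesis
            using J1 tJ unfolding B_def J_def[symmetric]
            by (simp add: right_diff_distrib sum_subtractf mult.commute eq)
        qed
        also have "(\<Sum>l = 1..p. \<phi> l t * C (t - int l)) = (\<Sum>x\<in>S. c x * (if t = s + int (snd x) then 1 else 0))"
        proof -
          define f where "f l = \<phi> l t * y (t - int l)" for l
          have "(\<Sum>x\<in>S. c x * (if t = s + int (snd x) then 1 else 0))
              = (\<Sum>m=1..p. \<Sum>j=1..p-m+1. if j = J then c (m,j) else 0)"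
            unfolding S_def using tJ by (subst sum.Sigma) (auto intro!: sum.cong)
          also have "\<dots> = (\<Sum>m=1..p. if J \<le> p - m + 1 then f (m + J - 1) else 0)"
          proof (intro sum.cong refl)
            fix m assume m: "m \<in> {1..p}"
            have e: "t - int (m + J - 1) = s - int m + 1" using tJ J1 m by auto
            show "(\<Sum>j=1..p-m+1. if j = J then c (m,j) else 0)
                = (if J \<le> p - m + 1 then f (m + J - 1) else 0)"
              using J1 by (simp add: c_def f_def e tJ) (metis add.commute add_diff_eq diff_add_eq)
          qed
          also have "\<dots> = (\<Sum>l=1..p. if J \<le> l then f l else 0)"
            by (rule reidx_nat[OF J1])
          also have "\<dots> = (\<Sum>l = 1..p. \<phi> l t * C (t - int l))"
            using tJ by (intro sum.cong refl) (auto simp: C_def f_def)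
          finally show ?thesis by simp
        qed
        finally show ?thesis using False by simp
      qed
    qed
  qed
  show ?thesis
  proof (intro allI impI)
    fix t assume "t > s"
    then have "y t = A t + B t" using claim[of "nat (t - (s - int p + 1))"] by auto
    then show "y t =
           (\<Sum>m = 1..p. \<Sum>j = 1..p - m + 1.
               \<phi> (m + j - 1) (s + int j) * green p \<phi> t (s + int j) * y (s - int m + 1))
         + (\<Sum>j = 1..nat (t - s). green p \<phi> t (s + int j) * v (s + int j))"
      using Aeq[of t] unfolding B_def G_def by simp
  qed
qed

end
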